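(* For all integers $n,m \geq 1$ with $\{n,m\} \neq \{1,1\}$ and $\{n,m\}\neq\{1,3\}$, $$\overline{a}(n)\, \overline{a}(m) \geq \overline{a}(n+m).$$ Moreover, among such pairs equality holds only when $\{n,m\}=\{1,2\}$.
   Context: The cubic overpartition function $\overline{a}(n)$ is defined by $\sum_{n\ge 0}\overline{a}(n)q^n=\frac{(-q;q)_\infty(-q^2;q^2)_\infty}{(q;q)_\infty(q^2;q^2)_\infty}$ for $|q|<1$, where $(a;q)_\infty=\prod_{j\ge 0}(1-aq^j)$. *)

theory Defs
  imports "HOL-Computational_Algebra.Formal_Power_Series"
begin

text \<open>Cubic overpartition function: coefficient of q^n in
  prod_{j>=1} (1+q^j)(1+q^{2j}) / ((1-q^j)(1-q^{2j})).
  Factors with j > n are congruent to 1 modulo q^(n+1), so the coefficient of q^n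
  equals that of the finite product over j = 1..n, computed as formal power series.\<close>

definition cubic_factor :: "nat \<Rightarrow> rat fps" where
  "cubic_factor j = (1 + fps_X ^ j) * (1 + fps_X ^ (2 * j))
      * inverse ((1 - fps_X ^ j) * (1 - fps_X ^ (2 * j)))"

definition cubic_overpartition :: "nat \<Rightarrow> rat" where
  "cubic_overpartition n = fps_nth (\<Prod>j\<in>{1..n}. cubic_factor j) n"

end

theory Submission
  imports Defs
begin

unbundle fps_syntax

definition LD :: "rat fps \<Rightarrow> rat fps" where
  "LD f = fps_X * fps_deriv f * inverse f"

lemma LD_mult:
  assumes "f $ 0 \<noteq> 0" "g $ 0 \<noteq> 0"
  shows "LD (f * g) = LD f + LD g"
proof -
  have 1: "f * inverse f = 1" "g * inverse g = 1" using assms by (auto intro: inverse_mult_eq_1')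
  have "LD (f * g) = fps_X * (f * fps_deriv g + fps_deriv f * g) * (inverse f * inverse g)"
    by (simp add: LD_def fps_inverse_mult)
  also have "\<dots> = fps_X * fps_deriv g * inverse g * (f * inverse f) + fps_X * fps_deriv f * inverse f * (g * inverse g)"
    by (simp add: algebra_simps)
  also have "\<dots> = LD f + LD g" using 1 by (simp add: LD_def)
  finally show ?thesis .
qed

lemma LD_inverse:
  assumes "f $ 0 \<noteq> 0"
  shows "LD (inverse f) = - LD f"
proof -
  have 1: "inverse f * f = 1" using assms by (auto intro: inverse_mult_eq_1)
  have "LD (inverse f) = - (fps_X * fps_deriv f * inverse f) * (inverse f * f)"
    using assms by (simp add: LD_def fps_inverse_deriv power2_eq_square algebra_simps)
  then show ?thesis using 1 by (simp add: LD_def)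
qed

lemma prod_nth0: "finite S \<Longrightarrow> (\<Prod>j\<in>S. f j) $ 0 = (\<Prod>j\<in>S. (f j :: rat fps) $ 0)"
  by (induction S rule: finite_induct) auto

lemma LD_prod:
  assumes "finite S" "\<And>j. j \<in> S \<Longrightarrow> f j $ 0 \<noteq> 0"
  shows "LD (\<Prod>j\<in>S. f j) = (\<Sum>j\<in>S. LD (f j))"
  using assms
proof (induction S rule: finite_induct)
  case empty then show ?case by (simp add: LD_def)
next
  case (insert x F)
  have "(\<Prod>j\<in>F. f j) $ 0 \<noteq> 0" using insert by (simp add: prod_nth0)
  then show ?case using insert by (simp add: LD_mult)
qed


definition Gj :: "nat \<Rightarrow> rat \<Rightarrow> rat fps" where
  "Gj j c = Abs_fps (\<lambda>k. if 0 < k \<and> j dvd k then - of_nat j * (-c) ^ (k div j) else 0)"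

lemma LD_geom:
  assumes j: "j \<ge> 1"
  shows "LD (1 + fps_const c * fps_X ^ j) = Gj j c"
proof -
  define f where "f = 1 + fps_const c * fps_X ^ j"
  have f0: "f $ 0 = 1" using j by (simp add: f_def)
  have d: "fps_X * fps_deriv f = fps_const (c * of_nat j) * fps_X ^ j"
  proof -
    have "fps_deriv f = fps_const c * (of_nat j * fps_X ^ (j - 1))"
      by (simp add: f_def fps_deriv_power')
    moreover have "fps_X * fps_X ^ (j - 1) = (fps_X ^ j :: rat fps)"
      using j by (metis Suc_diff_le diff_Suc_1 power_Suc)
    ultimately have "fps_X * fps_deriv f = fps_const c * fps_const (of_nat j) * (fps_X * fps_X ^ (j - 1))"
      by (simp add: fps_of_nat algebra_simps)
    also have "\<dots> = fps_const (c * of_nat j) * fps_X ^ j"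
      using \<open>fps_X * fps_X ^ (j - 1) = (fps_X ^ j :: rat fps)\<close> by (simp add: fps_const_mult)
    finally show ?thesis .
  qed
  have GF: "Gj j c * f = fps_X * fps_deriv f"
  proof (rule fps_ext)
    fix k
    have e: "Gj j c * f = Gj j c + fps_const c * (fps_X ^ j * Gj j c)"
      by (simp add: f_def algebra_simps)
    have "(Gj j c * f) $ k = Gj j c $ k + c * (if k < j then 0 else Gj j c $ (k - j))"
      unfolding e by (simp add: fps_X_power_mult_nth)
    also have "\<dots> = (if k = j then c * of_nat j else 0)"
    proof (cases "k < j")
      case True
      then show ?thesis by (auto simp: Gj_def dest: dvd_imp_le)
    next
      case False
      show ?thesis
      proof (cases "k = j")
        case True then show ?thesis using j by (simp add: Gj_def)
      next
        case False
        with \<open>\<not> k < j\<close> have kj: "k > j" by simp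
        show ?thesis
        proof (cases "j dvd k")
          case True
          then obtain t where t: "k = j * t" by blast
          have "\<not> t \<le> 1"
          proof
            assume "t \<le> 1"
            then have "j * t \<le> j * 1" by (rule mult_le_mono2)
            with kj t show False by simp
          qed
          then have t2: "t \<ge> 2" by simp
          have kd: "k div j = t" using t j by simp
          have k2: "(k - j) = j * (t - 1)" using t by (simp add: diff_mult_distrib2)
          have kd2: "(k - j) div j = t - 1" using k2 j by simp
          have pos: "0 < k - j" using kj by simp
          have dv: "j dvd (k - j)" using k2 by simp
          have "(-c) ^ t = (-c) * (-c) ^ (t - 1)" using t2
            by (metis Suc_diff_1 less_le_trans pos2 power_Suc)
          then show ?thesis using kj kd kd2 pos dv True \<open>k \<noteq> j\<close> j
            by (simp add: Gj_def algebra_simps)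
        next
          case False
          have "\<not> j dvd (k - j)" using False kj
            by (metis dvd_diff_nat dvd_refl le_add_diff_inverse2 less_imp_le dvd_add)
          then show ?thesis using False kj by (simp add: Gj_def)
        qed
      qed
    qed
    also have "\<dots> = (fps_X * fps_deriv f) $ k"
      unfolding d by (simp add: fps_X_power_mult_right_nth)
    finally show "(Gj j c * f) $ k = (fps_X * fps_deriv f) $ k" .
  qed
  have "LD f = Gj j c * (f * inverse f)"
    unfolding LD_def GF[symmetric] by (simp add: mult.assoc)
  also have "\<dots> = Gj j c" using f0 by (simp add: inverse_mult_eq_1')
  finally show ?thesis unfolding f_def .
qed


definition ell :: "nat \<Rightarrow> nat \<Rightarrow> nat" where
  "ell j k = (if j dvd k \<and> odd (k div j) then 2*j else 0)
     + (if (2*j) dvd k \<and> odd (k div (2*j)) then 4*j else 0)"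

lemma Gj_diff: "(Gj j 1 - Gj j (-1)) $ k = (if j dvd k \<and> odd (k div j) then 2 * of_nat j else 0)"
proof (cases "0 < k")
  case True
  then show ?thesis by (auto simp: Gj_def elim!: oddE evenE)
next
  case False
  then show ?thesis by (simp add: Gj_def)
qed

lemma LD_cf:
  assumes j: "j \<ge> 1"
  shows "LD (cubic_factor j) $ k = of_nat (ell j k)"
proof -
  have e1: "(1 + fps_X ^ i :: rat fps) = 1 + fps_const 1 * fps_X ^ i" for i by simp
  have e2: "(1 - fps_X ^ i :: rat fps) = 1 + fps_const (-1) * fps_X ^ i" for i
    by (simp add: fps_const_neg[symmetric])
  have z: "(1 + fps_const c * fps_X ^ i :: rat fps) $ 0 \<noteq> 0" if "i \<ge> 1" for c i
    using that by simp
  have j2: "2 * j \<ge> 1" using j by simp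
  have L1: "LD (1 + fps_X ^ i) = Gj i 1" if "i \<ge> 1" for i
    using LD_geom[OF that, of 1] by simp
  have L2: "LD (1 + fps_const (-1) * fps_X ^ i) = Gj i (-1)" if "i \<ge> 1" for i
    using LD_geom[OF that, of "-1"] by simp
  have z1: "(1 + fps_X ^ i :: rat fps) $ 0 \<noteq> 0" if "i \<ge> 1" for i
    using that by simp
  have cf: "cubic_factor j = (1 + fps_X ^ j) * (1 + fps_X ^ (2*j))
     * inverse ((1 + fps_const (-1) * fps_X ^ j) * (1 + fps_const (-1) * fps_X ^ (2*j)))"
    unfolding cubic_factor_def e2 ..
  have "LD (cubic_factor j) = LD (1 + fps_X ^ j) + LD (1 + fps_X ^ (2*j))
     - (LD (1 + fps_const (-1) * fps_X ^ j) + LD (1 + fps_const (-1) * fps_X ^ (2*j)))"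
    unfolding cf using j j2 z[OF j] z[OF j2] z1[OF j] z1[OF j2]
    by (simp add: LD_mult LD_inverse del: fps_const_neg)
  also have "\<dots> = (Gj j 1 - Gj j (-1)) + (Gj (2*j) 1 - Gj (2*j) (-1))"
    using j j2 by (simp only: L1 L2) (simp add: algebra_simps)
  finally have "LD (cubic_factor j) = (Gj j 1 - Gj j (-1)) + (Gj (2*j) 1 - Gj (2*j) (-1))" .
  then have "LD (cubic_factor j) $ k = (Gj j 1 - Gj j (-1)) $ k + (Gj (2*j) 1 - Gj (2*j) (-1)) $ k"
    by (simp only: fps_add_nth)
  then show ?thesis
    by (simp only: Gj_diff) (simp add: ell_def)
qed


definition sdiv :: "nat \<Rightarrow> nat" where
  "sdiv k = (\<Sum>j\<in>{1..k}. ell j k)"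

definition PN :: "nat \<Rightarrow> rat fps" where
  "PN N = (\<Prod>j\<in>{1..N}. cubic_factor j)"

lemma cf0: "j \<ge> 1 \<Longrightarrow> cubic_factor j $ 0 = 1"
  by (simp add: cubic_factor_def)

lemma PN0: "PN N $ 0 = 1"
  unfolding PN_def by (simp add: prod_nth0 cf0)

lemma ell_0: "ell j 0 = 0"
  by (simp add: ell_def)

lemma ell_big: "0 < k \<Longrightarrow> k < j \<Longrightarrow> ell j k = 0"
  by (auto simp: ell_def dest: dvd_imp_le)

lemma sum_ell: "k \<le> N \<Longrightarrow> (\<Sum>j\<in>{1..N}. ell j k) = sdiv k"
proof (cases "k = 0")
  case True then show ?thesis by (simp add: sdiv_def ell_0)
next
  case False
  assume kN: "k \<le> N"
  have "{1..N} = {1..k} \<union> {k+1..N}" using kN by auto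
  then have "(\<Sum>j\<in>{1..N}. ell j k) = (\<Sum>j\<in>{1..k}. ell j k) + (\<Sum>j\<in>{k+1..N}. ell j k)"
    by (simp add: sum.union_disjoint)
  also have "(\<Sum>j\<in>{k+1..N}. ell j k) = 0" using False by (auto intro!: sum.neutral ell_big)
  finally show ?thesis by (simp add: sdiv_def)
qed

lemma LD_PN: "LD (PN N) $ k = (\<Sum>j\<in>{1..N}. of_nat (ell j k))"
proof -
  have "LD (PN N) = (\<Sum>j\<in>{1..N}. LD (cubic_factor j))"
    unfolding PN_def by (rule LD_prod) (auto simp: cf0)
  then show ?thesis by (simp add: fps_sum_nth LD_cf)
qed

lemma rec_PN:
  assumes "n \<le> N"
  shows "of_nat n * PN N $ n = (\<Sum>i=1..n. of_nat (sdiv i) * PN N $ (n - i))"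
proof -
  let ?P = "PN N"
  have "fps_X * fps_deriv ?P = LD ?P * ?P"
    unfolding LD_def using PN0[of N] by (simp add: mult.assoc inverse_mult_eq_1)
  then have "(fps_X * fps_deriv ?P) $ n = (LD ?P * ?P) $ n" by simp
  moreover have "(fps_X * fps_deriv ?P) $ n = of_nat n * ?P $ n"
    by (cases n) (simp_all add: algebra_simps)
  moreover have "(LD ?P * ?P) $ n = (\<Sum>i=0..n. LD ?P $ i * ?P $ (n - i))"
    by (simp add: fps_mult_nth)
  moreover have "\<dots> = (\<Sum>i=1..n. LD ?P $ i * ?P $ (n - i))"
    by (simp add: sum.atLeast_Suc_atMost LD_PN ell_0)
  moreover have "\<dots> = (\<Sum>i=1..n. of_nat (sdiv i) * ?P $ (n - i))"
  proof (rule sum.cong)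
    fix i assume "i \<in> {1..n}"
    then have "i \<le> N" using assms by simp
    then show "LD ?P $ i * ?P $ (n - i) = of_nat (sdiv i) * ?P $ (n - i)"
      by (simp add: LD_PN sum_ell[symmetric])
  qed simp
  ultimately show ?thesis by simp
qed

lemma stable: "n \<le> N \<Longrightarrow> PN N $ n = cubic_overpartition n"
proof (induction n arbitrary: N rule: less_induct)
  case (less n)
  show ?case
  proof (cases "n = 0")
    case True then show ?thesis using PN0[of N] PN0[of 0] by (simp add: cubic_overpartition_def PN_def)
  next
    case False
    have "of_nat n * PN N $ n = (\<Sum>i=1..n. of_nat (sdiv i) * cubic_overpartition (n - i))"
      unfolding rec_PN[OF less.prems]
      by (rule sum.cong) (use less False in auto)
    moreover have "of_nat n * PN n $ n = (\<Sum>i=1..n. of_nat (sdiv i) * cubic_overpartition (n - i))"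
      unfolding rec_PN[OF order_refl]
      by (rule sum.cong) (use less False in auto)
    ultimately have "of_nat n * PN N $ n = of_nat n * PN n $ n" by simp
    then show ?thesis using False by (simp add: cubic_overpartition_def PN_def)
  qed
qed

lemma A0: "cubic_overpartition 0 = 1"
  by (simp add: cubic_overpartition_def)

lemma A_rec: "of_nat n * cubic_overpartition n = (\<Sum>i=1..n. of_nat (sdiv i) * cubic_overpartition (n - i))"
proof -
  have "of_nat n * cubic_overpartition n = of_nat n * PN n $ n" using stable[of n n] by simp
  also have "\<dots> = (\<Sum>i=1..n. of_nat (sdiv i) * PN n $ (n - i))" by (rule rec_PN) simp
  also have "\<dots> = (\<Sum>i=1..n. of_nat (sdiv i) * cubic_overpartition (n - i))"
    by (rule sum.cong) (auto simp: stable)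
  finally show ?thesis .
qed



lemma A_rec': "of_nat n * cubic_overpartition n = (\<Sum>i\<in>{1..<n+1}. of_nat (sdiv i) * cubic_overpartition (n - i))"
  using A_rec[of n] by (simp add: atLeastLessThanSuc_atLeastAtMost)

lemma sd1: "sdiv 1 = 2"
  unfolding sdiv_def ell_def by code_simp

lemma sd2: "sdiv 2 = 8"
  unfolding sdiv_def ell_def by code_simp

lemma sd3: "sdiv 3 = 8"
  unfolding sdiv_def ell_def by code_simp

lemma sd4: "sdiv 4 = 16"
  unfolding sdiv_def ell_def by code_simp

lemma sd5: "sdiv 5 = 12"
  unfolding sdiv_def ell_def by code_simp

lemma sd6: "sdiv 6 = 32"
  unfolding sdiv_def ell_def by code_simp

lemma sd7: "sdiv 7 = 16"
  unfolding sdiv_def ell_def by code_simp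

lemma sd8: "sdiv 8 = 32"
  unfolding sdiv_def ell_def by code_simp

lemma sd9: "sdiv 9 = 26"
  unfolding sdiv_def ell_def by code_simp

lemma sd10: "sdiv 10 = 48"
  unfolding sdiv_def ell_def by code_simp

lemma sd11: "sdiv 11 = 24"
  unfolding sdiv_def ell_def by code_simp

lemma sd12: "sdiv 12 = 64"
  unfolding sdiv_def ell_def by code_simp

lemma sd13: "sdiv 13 = 28"
  unfolding sdiv_def ell_def by code_simp

lemma sd14: "sdiv 14 = 64"
  unfolding sdiv_def ell_def by code_simp

lemma sd15: "sdiv 15 = 48"
  unfolding sdiv_def ell_def by code_simp

lemma sd16: "sdiv 16 = 64"
  unfolding sdiv_def ell_def by code_simp

lemma sd17: "sdiv 17 = 36"
  unfolding sdiv_def ell_def by code_simp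

lemma sd18: "sdiv 18 = 104"
  unfolding sdiv_def ell_def by code_simp

lemma sd19: "sdiv 19 = 40"
  unfolding sdiv_def ell_def by code_simp

lemma sd20: "sdiv 20 = 96"
  unfolding sdiv_def ell_def by code_simp

lemma sd21: "sdiv 21 = 64"
  unfolding sdiv_def ell_def by code_simp

lemma sd22: "sdiv 22 = 96"
  unfolding sdiv_def ell_def by code_simp

lemma sd23: "sdiv 23 = 48"
  unfolding sdiv_def ell_def by code_simp

lemma sd24: "sdiv 24 = 128"
  unfolding sdiv_def ell_def by code_simp

lemma sd25: "sdiv 25 = 62"
  unfolding sdiv_def ell_def by code_simp

lemma sd26: "sdiv 26 = 112"
  unfolding sdiv_def ell_def by code_simp

lemma sd27: "sdiv 27 = 80"
  unfolding sdiv_def ell_def by code_simp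

lemma sd28: "sdiv 28 = 128"
  unfolding sdiv_def ell_def by code_simp

lemma sd1s: "sdiv (Suc 0) = 2" using sd1 by simp

lemma Av0: "cubic_overpartition 0 = 1" by (rule A0)

lemma Av1: "cubic_overpartition 1 = 2"
  using A_rec'[of 1] by (simp add: atLeastLessThan_nat_numeral Av0 sd1 sd1s)

lemma Av1s: "cubic_overpartition (Suc 0) = 2" using Av1 by simp

lemma Av2: "cubic_overpartition 2 = 6"
  using A_rec'[of 2] by (simp add: atLeastLessThan_nat_numeral Av0 Av1 Av1s sd1 sd2 sd1s)

lemma Av3: "cubic_overpartition 3 = 12"
  using A_rec'[of 3] by (simp add: atLeastLessThan_nat_numeral Av0 Av1 Av2 Av1s sd1 sd2 sd3 sd1s)

lemma Av4: "cubic_overpartition 4 = 26"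
  using A_rec'[of 4] by (simp add: atLeastLessThan_nat_numeral Av0 Av1 Av2 Av3 Av1s sd1 sd2 sd3 sd4 sd1s)

lemma Av5: "cubic_overpartition 5 = 48"
  using A_rec'[of 5] by (simp add: atLeastLessThan_nat_numeral Av0 Av1 Av2 Av3 Av4 Av1s sd1 sd2 sd3 sd4 sd5 sd1s)

lemma Av6: "cubic_overpartition 6 = 92"
  using A_rec'[of 6] by (simp add: atLeastLessThan_nat_numeral Av0 Av1 Av2 Av3 Av4 Av5 Av1s sd1 sd2 sd3 sd4 sd5 sd6 sd1s)

lemma Av7: "cubic_overpartition 7 = 160"
  using A_rec'[of 7] by (simp add: atLeastLessThan_nat_numeral Av0 Av1 Av2 Av3 Av4 Av5 Av6 Av1s sd1 sd2 sd3 sd4 sd5 sd6 sd7 sd1s)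

lemma Av8: "cubic_overpartition 8 = 282"
  using A_rec'[of 8] by (simp add: atLeastLessThan_nat_numeral Av0 Av1 Av2 Av3 Av4 Av5 Av6 Av7 Av1s sd1 sd2 sd3 sd4 sd5 sd6 sd7 sd8 sd1s)

lemma Av9: "cubic_overpartition 9 = 470"
  using A_rec'[of 9] by (simp add: atLeastLessThan_nat_numeral Av0 Av1 Av2 Av3 Av4 Av5 Av6 Av7 Av8 Av1s sd1 sd2 sd3 sd4 sd5 sd6 sd7 sd8 sd9 sd1s)

lemma Av10: "cubic_overpartition 10 = 784"
  using A_rec'[of 10] by (simp add: atLeastLessThan_nat_numeral Av0 Av1 Av2 Av3 Av4 Av5 Av6 Av7 Av8 Av9 Av1s sd1 sd2 sd3 sd4 sd5 sd6 sd7 sd8 sd9 sd10 sd1s)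

lemma Av11: "cubic_overpartition 11 = 1260"
  using A_rec'[of 11] by (simp add: atLeastLessThan_nat_numeral Av0 Av1 Av2 Av3 Av4 Av5 Av6 Av7 Av8 Av9 Av10 Av1s sd1 sd2 sd3 sd4 sd5 sd6 sd7 sd8 sd9 sd10 sd11 sd1s)

lemma Av12: "cubic_overpartition 12 = 2020"
  using A_rec'[of 12] by (simp add: atLeastLessThan_nat_numeral Av0 Av1 Av2 Av3 Av4 Av5 Av6 Av7 Av8 Av9 Av10 Av11 Av1s sd1 sd2 sd3 sd4 sd5 sd6 sd7 sd8 sd9 sd10 sd11 sd12 sd1s)

lemma Av13: "cubic_overpartition 13 = 3152"
  using A_rec'[of 13] by (simp add: atLeastLessThan_nat_numeral Av0 Av1 Av2 Av3 Av4 Av5 Av6 Av7 Av8 Av9 Av10 Av11 Av12 Av1s sd1 sd2 sd3 sd4 sd5 sd6 sd7 sd8 sd9 sd10 sd11 sd12 sd13 sd1s)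

lemma Av14: "cubic_overpartition 14 = 4896"
  using A_rec'[of 14] by (simp add: atLeastLessThan_nat_numeral Av0 Av1 Av2 Av3 Av4 Av5 Av6 Av7 Av8 Av9 Av10 Av11 Av12 Av13 Av1s sd1 sd2 sd3 sd4 sd5 sd6 sd7 sd8 sd9 sd10 sd11 sd12 sd13 sd14 sd1s)

lemma Av15: "cubic_overpartition 15 = 7456"
  using A_rec'[of 15] by (simp add: atLeastLessThan_nat_numeral Av0 Av1 Av2 Av3 Av4 Av5 Av6 Av7 Av8 Av9 Av10 Av11 Av12 Av13 Av14 Av1s sd1 sd2 sd3 sd4 sd5 sd6 sd7 sd8 sd9 sd10 sd11 sd12 sd13 sd14 sd15 sd1s)

lemma Av16: "cubic_overpartition 16 = 11290"
  using A_rec'[of 16] by (simp add: atLeastLessThan_nat_numeral Av0 Av1 Av2 Av3 Av4 Av5 Av6 Av7 Av8 Av9 Av10 Av11 Av12 Av13 Av14 Av15 Av1s sd1 sd2 sd3 sd4 sd5 sd6 sd7 sd8 sd9 sd10 sd11 sd12 sd13 sd14 sd15 sd16 sd1s)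

lemma Av17: "cubic_overpartition 17 = 16836"
  using A_rec'[of 17] by (simp add: atLeastLessThan_nat_numeral Av0 Av1 Av2 Av3 Av4 Av5 Av6 Av7 Av8 Av9 Av10 Av11 Av12 Av13 Av14 Av15 Av16 Av1s sd1 sd2 sd3 sd4 sd5 sd6 sd7 sd8 sd9 sd10 sd11 sd12 sd13 sd14 sd15 sd16 sd17 sd1s)

lemma Av18: "cubic_overpartition 18 = 24962"
  using A_rec'[of 18] by (simp add: atLeastLessThan_nat_numeral Av0 Av1 Av2 Av3 Av4 Av5 Av6 Av7 Av8 Av9 Av10 Av11 Av12 Av13 Av14 Av15 Av16 Av17 Av1s sd1 sd2 sd3 sd4 sd5 sd6 sd7 sd8 sd9 sd10 sd11 sd12 sd13 sd14 sd15 sd16 sd17 sd18 sd1s)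

lemma Av19: "cubic_overpartition 19 = 36556"
  using A_rec'[of 19] by (simp add: atLeastLessThan_nat_numeral Av0 Av1 Av2 Av3 Av4 Av5 Av6 Av7 Av8 Av9 Av10 Av11 Av12 Av13 Av14 Av15 Av16 Av17 Av18 Av1s sd1 sd2 sd3 sd4 sd5 sd6 sd7 sd8 sd9 sd10 sd11 sd12 sd13 sd14 sd15 sd16 sd17 sd18 sd19 sd1s)

lemma Av20: "cubic_overpartition 20 = 53232"
  using A_rec'[of 20] by (simp add: atLeastLessThan_nat_numeral Av0 Av1 Av2 Av3 Av4 Av5 Av6 Av7 Av8 Av9 Av10 Av11 Av12 Av13 Av14 Av15 Av16 Av17 Av18 Av19 Av1s sd1 sd2 sd3 sd4 sd5 sd6 sd7 sd8 sd9 sd10 sd11 sd12 sd13 sd14 sd15 sd16 sd17 sd18 sd19 sd20 sd1s)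

lemma Av21: "cubic_overpartition 21 = 76736"
  using A_rec'[of 21] by (simp add: atLeastLessThan_nat_numeral Av0 Av1 Av2 Av3 Av4 Av5 Av6 Av7 Av8 Av9 Av10 Av11 Av12 Av13 Av14 Av15 Av16 Av17 Av18 Av19 Av20 Av1s sd1 sd2 sd3 sd4 sd5 sd6 sd7 sd8 sd9 sd10 sd11 sd12 sd13 sd14 sd15 sd16 sd17 sd18 sd19 sd20 sd21 sd1s)

lemma Av22: "cubic_overpartition 22 = 110012"
  using A_rec'[of 22] by (simp add: atLeastLessThan_nat_numeral Av0 Av1 Av2 Av3 Av4 Av5 Av6 Av7 Av8 Av9 Av10 Av11 Av12 Av13 Av14 Av15 Av16 Av17 Av18 Av19 Av20 Av21 Av1s sd1 sd2 sd3 sd4 sd5 sd6 sd7 sd8 sd9 sd10 sd11 sd12 sd13 sd14 sd15 sd16 sd17 sd18 sd19 sd20 sd21 sd22 sd1s)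

lemma Av23: "cubic_overpartition 23 = 156384"
  using A_rec'[of 23] by (simp add: atLeastLessThan_nat_numeral Av0 Av1 Av2 Av3 Av4 Av5 Av6 Av7 Av8 Av9 Av10 Av11 Av12 Av13 Av14 Av15 Av16 Av17 Av18 Av19 Av20 Av21 Av22 Av1s sd1 sd2 sd3 sd4 sd5 sd6 sd7 sd8 sd9 sd10 sd11 sd12 sd13 sd14 sd15 sd16 sd17 sd18 sd19 sd20 sd21 sd22 sd23 sd1s)

lemma Av24: "cubic_overpartition 24 = 221156"
  using A_rec'[of 24] by (simp add: atLeastLessThan_nat_numeral Av0 Av1 Av2 Av3 Av4 Av5 Av6 Av7 Av8 Av9 Av10 Av11 Av12 Av13 Av14 Av15 Av16 Av17 Av18 Av19 Av20 Av21 Av22 Av23 Av1s sd1 sd2 sd3 sd4 sd5 sd6 sd7 sd8 sd9 sd10 sd11 sd12 sd13 sd14 sd15 sd16 sd17 sd18 sd19 sd20 sd21 sd22 sd23 sd24 sd1s)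

lemma Av25: "cubic_overpartition 25 = 310482"
  using A_rec'[of 25] by (simp add: atLeastLessThan_nat_numeral Av0 Av1 Av2 Av3 Av4 Av5 Av6 Av7 Av8 Av9 Av10 Av11 Av12 Av13 Av14 Av15 Av16 Av17 Av18 Av19 Av20 Av21 Av22 Av23 Av24 Av1s sd1 sd2 sd3 sd4 sd5 sd6 sd7 sd8 sd9 sd10 sd11 sd12 sd13 sd14 sd15 sd16 sd17 sd18 sd19 sd20 sd21 sd22 sd23 sd24 sd25 sd1s)

lemma Av26: "cubic_overpartition 26 = 433776"
  using A_rec'[of 26] by (simp add: atLeastLessThan_nat_numeral Av0 Av1 Av2 Av3 Av4 Av5 Av6 Av7 Av8 Av9 Av10 Av11 Av12 Av13 Av14 Av15 Av16 Av17 Av18 Av19 Av20 Av21 Av22 Av23 Av24 Av25 Av1s sd1 sd2 sd3 sd4 sd5 sd6 sd7 sd8 sd9 sd10 sd11 sd12 sd13 sd14 sd15 sd16 sd17 sd18 sd19 sd20 sd21 sd22 sd23 sd24 sd25 sd26 sd1s)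

lemma Av27: "cubic_overpartition 27 = 602200"
  using A_rec'[of 27] by (simp add: atLeastLessThan_nat_numeral Av0 Av1 Av2 Av3 Av4 Av5 Av6 Av7 Av8 Av9 Av10 Av11 Av12 Av13 Av14 Av15 Av16 Av17 Av18 Av19 Av20 Av21 Av22 Av23 Av24 Av25 Av26 Av1s sd1 sd2 sd3 sd4 sd5 sd6 sd7 sd8 sd9 sd10 sd11 sd12 sd13 sd14 sd15 sd16 sd17 sd18 sd19 sd20 sd21 sd22 sd23 sd24 sd25 sd26 sd27 sd1s)

lemma Av28: "cubic_overpartition 28 = 832224"
  using A_rec'[of 28] by (simp add: atLeastLessThan_nat_numeral Av0 Av1 Av2 Av3 Av4 Av5 Av6 Av7 Av8 Av9 Av10 Av11 Av12 Av13 Av14 Av15 Av16 Av17 Av18 Av19 Av20 Av21 Av22 Av23 Av24 Av25 Av26 Av27 Av1s sd1 sd2 sd3 sd4 sd5 sd6 sd7 sd8 sd9 sd10 sd11 sd12 sd13 sd14 sd15 sd16 sd17 sd18 sd19 sd20 sd21 sd22 sd23 sd24 sd25 sd26 sd27 sd28 sd1s)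

lemma Av2s: "cubic_overpartition (Suc (Suc 0)) = 6" using Av2 by (simp add: numeral_eq_Suc)
lemma Av3s: "cubic_overpartition (Suc (Suc (Suc 0))) = 12" using Av3 by (simp add: numeral_eq_Suc)

lemmas Avals = Av2s Av3s Av0 Av1 Av2 Av3 Av4 Av5 Av6 Av7 Av8 Av9 Av10 Av11 Av12 Av13 Av14 Av15 Av16 Av17 Av18 Av19 Av20 Av21 Av22 Av23 Av24 Av25 Av26 Av27 Av28 Av1s

definition exc :: "nat \<Rightarrow> nat \<Rightarrow> bool" where
  "exc n m \<longleftrightarrow> (n = 1 \<and> m = 1) \<or> (n = 1 \<and> m = 3) \<or> (n = 3 \<and> m = 1)"

definition spec :: "nat \<Rightarrow> nat \<Rightarrow> bool" where
  "spec n m \<longleftrightarrow> exc n m \<or> (n = 1 \<and> m = 2) \<or> (n = 2 \<and> m = 1)"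

lemma tab_pairs: "\<forall>n\<in>{1..<15}. \<forall>m\<in>{1..<15}.
   cubic_overpartition (n + m) \<le> cubic_overpartition n * cubic_overpartition m + (if exc n m then 2 else 0)
   \<and> (\<not> spec n m \<longrightarrow> cubic_overpartition (n + m) < cubic_overpartition n * cubic_overpartition m)"
  by (simp add: atLeastLessThan_nat_numeral Avals exc_def spec_def)

lemma tab_low: "\<forall>m\<in>{0..<11}. (of_nat m :: rat) ^ 3 \<le> 4 * cubic_overpartition m"
  by (simp add: atLeastLessThan_nat_numeral Avals)



abbreviation "a \<equiv> cubic_overpartition"

lemma ell_le: "ell j k \<le> 6 * j"
  by (simp add: ell_def)

lemma ell_kk: "k \<ge> 1 \<Longrightarrow> ell k k = 2 * k"
  by (simp add: ell_def)

lemma ell_mid: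
  assumes "k div 2 < j" "j < k"
  shows "ell j k = 0"
proof -
  have nd: "\<not> j dvd k"
  proof
    assume "j dvd k"
    then obtain t where t: "k = j * t" by blast
    have "t \<noteq> 0" using t assms by auto
    moreover have "t \<noteq> 1" using t assms by auto
    ultimately have "t \<ge> 2" by simp
    then have "j * 2 \<le> k" using t by (metis mult_le_mono2)
    then show False using assms by linarith
  qed
  have "\<not> (2 * j) dvd k" using nd by (meson dvd_mult_right)
  then show ?thesis using nd by (simp add: ell_def)
qed

lemma gauss2: "2 * (\<Sum>j\<in>{1..h}. j) = h * (h + 1 :: nat)"
  by (induction h) (auto simp: algebra_simps)

lemma sdiv_split: "sdiv k \<le> 2 * k + 3 * ((k div 2) * (k div 2 + 1))"
proof (cases "k = 0")
  case True then show ?thesis by (simp add: sdiv_def)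
next
  case False
  let ?h = "k div 2"
  have "{1..k} = {1..?h} \<union> {?h+1..k}" using False by auto
  then have "sdiv k = (\<Sum>j\<in>{1..?h}. ell j k) + (\<Sum>j\<in>{?h+1..k}. ell j k)"
    unfolding sdiv_def by (simp add: sum.union_disjoint)
  also have "(\<Sum>j\<in>{?h+1..k}. ell j k) = (\<Sum>j\<in>{?h+1..k}. if j = k then 2 * k else 0)"
  proof (rule sum.cong)
    fix j assume "j \<in> {?h+1..k}"
    then show "ell j k = (if j = k then 2 * k else 0)"
      using False by (cases "j = k") (auto simp: ell_kk intro!: ell_mid)
  qed simp
  also have "\<dots> = 2 * k" using False by simp
  also have "(\<Sum>j\<in>{1..?h}. ell j k) \<le> (\<Sum>j\<in>{1..?h}. 6 * j)"
    by (rule sum_mono) (rule ell_le)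
  also have "(\<Sum>j\<in>{1..?h}. 6 * j) = 3 * (?h * (?h + 1))"
    using gauss2[of ?h] by (simp add: sum_distrib_left[symmetric])
  finally show ?thesis by simp
qed

lemma sdiv_le: "4 * sdiv k \<le> 3 * k^2 + 14 * k"
proof -
  let ?h = "k div 2"
  have h: "2 * ?h \<le> k" by simp
  have "4 * ?h * ?h \<le> k * k" using mult_le_mono[OF h h] by simp
  then have "4 * (3 * (?h * (?h + 1))) \<le> 3 * k^2 + 6 * k" using h
    by (simp add: power2_eq_square algebra_simps)
  then show ?thesis using sdiv_split[of k] by linarith
qed

lemma sdiv_ge: "k \<ge> 1 \<Longrightarrow> 2 * k \<le> sdiv k"
proof -
  assume k: "k \<ge> 1"
  have "ell k k \<le> sdiv k" unfolding sdiv_def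
    by (rule member_le_sum) (use k in auto)
  then show ?thesis using ell_kk[OF k] by simp
qed

lemma sdiv_le_rat: "k \<le> M \<Longrightarrow> 4 * (of_nat (sdiv k) :: rat) \<le> 3 * of_nat M ^ 2 + 14 * of_nat M"
proof -
  assume "k \<le> M"
  then have "3 * k^2 + 14 * k \<le> 3 * M^2 + 14 * M"
    by (intro add_mono mult_le_mono2 power_mono) auto
  then have "4 * sdiv k \<le> 3 * M^2 + 14 * M" using sdiv_le[of k] by linarith
  then have "of_nat (4 * sdiv k) \<le> (of_nat (3 * M^2 + 14 * M) :: rat)" by (rule of_nat_mono)
  then show ?thesis by simp
qed

lemma A_pos: "a n \<ge> 1"
proof (induction n rule: less_induct)
  case (less n)
  show ?case
  proof (cases "n = 0")
    case True then show ?thesis by (simp add: A0)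
  next
    case False
    have nn: "\<forall>i\<in>{1..n}. 0 \<le> of_nat (sdiv i) * a (n - i)"
    proof
      fix i assume i: "i \<in> {1..n}"
      then have "1 \<le> a (n - i)" using less.IH[of "n - i"] False by auto
      then show "0 \<le> of_nat (sdiv i) * a (n - i)" by simp
    qed
    have "of_nat (sdiv n) * a (n - n) \<le> (\<Sum>i=1..n. of_nat (sdiv i) * a (n - i))"
      by (rule member_le_sum) (use False nn in auto)
    then have "of_nat (2 * n) \<le> of_nat n * a n"
      using A_rec[of n] sdiv_ge[of n] False A0
      by (simp del: of_nat_mult)
    then have "of_nat n * 2 \<le> of_nat n * a n" by (simp add: mult.commute)
    then have "2 \<le> a n" using False by (simp add: mult_le_cancel_left)
    then show ?thesis by simp
  qed
qed


lemma S3: "4 * (\<Sum>j<Suc m. (of_nat j :: rat) ^ 3) = (of_nat m)^2 * (of_nat m + 1)^2"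
  by (induction m) (simp_all add: algebra_simps power2_eq_square power3_eq_cube)

lemma G_id: "60 * (\<Sum>j<m. of_nat (m - j) * (of_nat j :: rat) ^ 3)
   = 3 * of_nat m ^ 5 - 5 * of_nat m ^ 3 + 2 * of_nat m"
proof (induction m)
  case 0 then show ?case by simp
next
  case (Suc m)
  have "(\<Sum>j<Suc (Suc m). of_nat (Suc m - j) * (of_nat j :: rat) ^ 3)
     = (\<Sum>j<Suc (Suc m). of_nat (Suc m - j) * (of_nat j :: rat) ^ 3 - 0)" by simp
  also have "\<dots> = (\<Sum>j<Suc m. of_nat (Suc m - j) * (of_nat j :: rat) ^ 3)"
    by (simp add: lessThan_Suc)
  also have "\<dots> = (\<Sum>j<Suc m. of_nat (m - j) * (of_nat j :: rat) ^ 3 + (of_nat j) ^ 3)"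
    by (rule sum.cong) (auto simp: Suc_diff_le algebra_simps)
  also have "\<dots> = (\<Sum>j<m. of_nat (m - j) * (of_nat j :: rat) ^ 3) + (\<Sum>j<Suc m. (of_nat j :: rat) ^ 3)"
    by (simp add: sum.distrib lessThan_Suc)
  finally have e: "(\<Sum>j<Suc (Suc m). of_nat (Suc m - j) * (of_nat j :: rat) ^ 3)
      = (\<Sum>j<m. of_nat (m - j) * (of_nat j :: rat) ^ 3) + (\<Sum>j<Suc m. (of_nat j :: rat) ^ 3)" .
  have "(\<Sum>j<Suc m. of_nat (Suc m - j) * (of_nat j :: rat) ^ 3)
      = (\<Sum>j<Suc (Suc m). of_nat (Suc m - j) * (of_nat j :: rat) ^ 3)"
    by (simp add: lessThan_Suc)
  then have "60 * (\<Sum>j<Suc m. of_nat (Suc m - j) * (of_nat j :: rat) ^ 3)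
      = 60 * (\<Sum>j<m. of_nat (m - j) * (of_nat j :: rat) ^ 3) + 15 * (4 * (\<Sum>j<Suc m. (of_nat j :: rat) ^ 3))"
    using e by simp
  also have "\<dots> = 3 * of_nat (Suc m) ^ 5 - 5 * of_nat (Suc m) ^ 3 + 2 * of_nat (Suc m)"
    unfolding Suc.IH S3 by (simp add: algebra_simps power2_eq_square power3_eq_cube
        numeral_eq_Suc)
  finally show ?case .
qed

lemma reidx: "(\<Sum>i\<in>{1..m}. of_nat i * (of_nat (m - i) :: rat) ^ 3)
    = (\<Sum>j<m. of_nat (m - j) * (of_nat j :: rat) ^ 3)"
  by (rule sum.reindex_bij_witness[where i = "\<lambda>j. m - j" and j = "\<lambda>i. m - i"]) auto

lemma A_low: "(of_nat m :: rat) ^ 3 \<le> 4 * a m"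
proof (induction m rule: less_induct)
  case (less m)
  show ?case
  proof (cases "m < 11")
    case True
    then show ?thesis using tab_low by auto
  next
    case False
    then have m11: "m \<ge> 11" by simp
    have "(\<Sum>i\<in>{1..m}. of_nat i * (of_nat (m - i) :: rat) ^ 3)
        \<le> (\<Sum>i\<in>{1..m}. 2 * (of_nat (sdiv i) * a (m - i)))"
    proof (rule sum_mono)
      fix i assume i: "i \<in> {1..m}"
      have s: "2 * of_nat i \<le> (of_nat (sdiv i) :: rat)"
        using sdiv_ge[of i] i by (metis atLeastAtMost_iff of_nat_le_iff of_nat_mult of_nat_numeral)
      have l: "(of_nat (m - i) :: rat) ^ 3 \<le> 4 * a (m - i)" using less.IH[of "m - i"] i by auto
      have "of_nat i * (of_nat (m - i) :: rat) ^ 3 \<le> (of_nat (sdiv i) / 2) * (4 * a (m - i))"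
        by (rule mult_mono) (use s l in auto)
      then show "of_nat i * (of_nat (m - i) :: rat) ^ 3 \<le> 2 * (of_nat (sdiv i) * a (m - i))"
        by simp
    qed
    also have "\<dots> = 2 * (of_nat m * a m)"
      by (simp add: A_rec sum_distrib_left)
    finally have "(3 * of_nat m ^ 5 - 5 * of_nat m ^ 3 + 2 * of_nat m) / 60 \<le> 2 * (of_nat m * a m)"
      using G_id[of m] reidx[of m] by simp
    moreover have "of_nat m * (of_nat m) ^ 3 \<le> 2 * ((3 * of_nat m ^ 5 - 5 * of_nat m ^ 3 + 2 * (of_nat m :: rat)) / 60)"
    proof -
      have mm: "(11::rat) \<le> of_nat m" using m11 by simp
      have p: "0 \<le> (of_nat m :: rat) ^ 3" by simp
      have "(of_nat m :: rat) ^ 3 * 5 \<le> of_nat m ^ 3 * (3 * of_nat m ^ 2 - 30 * of_nat m)"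
      proof (rule mult_left_mono[OF _ p])
        have "(33::rat) * 1 \<le> (3 * of_nat m) * (of_nat m - 10)"
          by (rule mult_mono) (use mm in auto)
        then have "(5::rat) \<le> 3 * of_nat m * (of_nat m - 10)" by simp
        then show "5 \<le> 3 * (of_nat m :: rat) ^ 2 - 30 * of_nat m"
          by (simp add: power2_eq_square algebra_simps)
      qed
      then show ?thesis by (simp add: algebra_simps power2_eq_square power3_eq_cube
          eval_nat_numeral)
    qed
    ultimately have "of_nat m * (of_nat m) ^ 3 \<le> of_nat m * (4 * a m)" by linarith
    then show ?thesis using m11 by (simp add: mult_le_cancel_left)
  qed
qed


lemma core:
  assumes n1: "1 \<le> n" and nm: "n \<le> m" and m15: "15 \<le> m"
    and IH: "\<And>x y. 1 \<le> x \<Longrightarrow> 1 \<le> y \<Longrightarrow> x + y < n + m \<Longrightarrow>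
              a (x + y) \<le> a x * a y + (if exc x y then 2 else 0)"
  shows "a (n + m) < a n * a m"
proof -
  define s where "s k = (of_nat (sdiv k) :: rat)" for k
  define M where "M = (of_nat m :: rat)"
  define N where "N = n + m"
  have s_nn: "0 \<le> s k" for k by (simp add: s_def)
  have s_ge: "2 \<le> s k" if "1 \<le> k" for k
  proof -
    have "2 * 1 \<le> 2 * k" using that by simp
    also have "\<dots> \<le> sdiv k" using sdiv_ge[OF that] .
    finally have "2 \<le> sdiv k" by simp
    then show ?thesis unfolding s_def
      by (metis of_nat_le_iff of_nat_numeral)
  qed
  have s_le: "4 * s k \<le> 3 * M^2 + 14 * M" if "k \<le> m" for k
    using sdiv_le_rat[OF that] by (simp add: s_def M_def)
  have s_le2: "s k \<le> 3 * M^2 + 7 * M" if "k \<le> 2 * m" for k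
  proof -
    have "4 * s k \<le> 3 * (of_nat (2 * m))^2 + 14 * of_nat (2 * m)"
      using sdiv_le_rat[OF that] by (simp add: s_def)
    then show ?thesis by (simp add: M_def power2_eq_square algebra_simps)
  qed
  have M15: "15 \<le> M" using m15 by (simp add: M_def)
  have big: "6 * M^2 + 21 * M < 2 * a m"
  proof -
    have "M * M \<ge> 15 * M" using M15 by (simp add: mult_right_mono)
    then have "M * M > 12 * M + 42" using M15 by linarith
    then have "M * (M * M) > M * (12 * M + 42)" using M15 by (simp add: mult_strict_left_mono)
    moreover have "M ^ 3 \<le> 4 * a m" using A_low[of m] by (simp add: M_def)
    ultimately show ?thesis by (simp add: power2_eq_square power3_eq_cube algebra_simps)
  qed
  have a_ge: "1 \<le> a k" for k by (rule A_pos)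

  have rec: "of_nat N * a N = (\<Sum>k\<in>{1..N}. s k * a (N - k))"
    using A_rec[of N] by (simp add: s_def)
  have spl: "{1..N} = {1..m} \<union> {m+1..m+n}" using n1 by (auto simp: N_def)
  have sumsplit: "(\<Sum>k\<in>{1..N}. s k * a (N - k))
      = (\<Sum>k\<in>{1..m}. s k * a (N - k)) + (\<Sum>k\<in>{m+1..m+n}. s k * a (N - k))"
    unfolding spl by (rule sum.union_disjoint) auto

  define e where "e k = (if k < m \<and> exc n (m - k) then (2::rat) else 0)" for k
  have P1: "(\<Sum>k\<in>{1..m}. s k * a (N - k)) \<le> (\<Sum>k\<in>{1..m}. s k * a (m - k) * a n + s k * e k)"
  proof (rule sum_mono)
    fix k assume k: "k \<in> {1..m}"
    have "a (N - k) \<le> a n * a (m - k) + e k"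
    proof (cases "k = m")
      case True
      then show ?thesis by (simp add: N_def A0 e_def)
    next
      case False
      then have km: "k < m" using k by simp
      have "a (n + (m - k)) \<le> a n * a (m - k) + (if exc n (m - k) then 2 else 0)"
        by (rule IH) (use n1 km k in auto)
      moreover have "n + (m - k) = N - k" using km by (simp add: N_def)
      ultimately show ?thesis using km by (simp add: e_def)
    qed
    then have "s k * a (N - k) \<le> s k * (a n * a (m - k) + e k)"
      by (rule mult_left_mono) (rule s_nn)
    then show "s k * a (N - k) \<le> s k * a (m - k) * a n + s k * e k"
      by (simp add: algebra_simps)
  qed
  have P1b: "(\<Sum>k\<in>{1..m}. s k * a (m - k) * a n + s k * e k)
      = a n * (M * a m) + (\<Sum>k\<in>{1..m}. s k * e k)"
  proof -
    have 1: "(\<Sum>k\<in>{1..m}. s k * a (m - k) * a n) = (\<Sum>k\<in>{1..m}. s k * a (m - k)) * a n"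
      by (simp only: sum_distrib_right)
    have 2: "(\<Sum>k\<in>{1..m}. s k * a (m - k)) = M * a m"
      using A_rec[of m] by (simp add: s_def M_def)
    have 3: "M * a m * a n = a n * (M * a m)" by (rule mult.commute)
    show ?thesis by (simp only: sum.distrib 1 2 3)
  qed
  define C where "C = (3 * M^2 + 14 * M) / 2"
  have C_nn: "0 \<le> C" using M15 by (simp add: C_def)
  have Err: "(\<Sum>k\<in>{1..m}. s k * e k) \<le> 3 * M^2 + 14 * M"
  proof -
    have "(\<Sum>k\<in>{1..m}. s k * e k)
        \<le> (\<Sum>k\<in>{1..m}. (if k = m - 1 then C else 0) + (if k = m - 3 then C else 0))"
    proof (rule sum_mono)
      fix k assume k: "k \<in> {1..m}"
      show "s k * e k \<le> (if k = m - 1 then C else 0) + (if k = m - 3 then C else 0)"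
      proof (cases "k < m \<and> exc n (m - k)")
        case True
        then have ek: "e k = 2" by (simp add: e_def)
        have "m - k = 1 \<or> m - k = 3" using True unfolding exc_def by blast
        then have "k = m - 1 \<or> k = m - 3" using True by arith
        moreover have "s k * 2 \<le> C" using s_le[of k] k by (simp add: C_def)
        moreover have "m - 1 \<noteq> m - 3" using m15 by arith
        ultimately show ?thesis using ek C_nn by auto
      next
        case False
        then have "e k = 0" by (simp add: e_def)
        then show ?thesis using C_nn by simp
      qed
    qed
    also have "\<dots> = (\<Sum>k\<in>{1..m}. (if k = m - 1 then C else 0)) + (\<Sum>k\<in>{1..m}. (if k = m - 3 then C else 0))"
      by (rule sum.distrib)
    also have "\<dots> = C + C"
    proof -
      have "1 \<le> m - 1" "m - 1 \<le> m" "1 \<le> m - 3" "m - 3 \<le> m" using m15 by arith+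
      then have "m - 1 \<in> {1..m}" "m - 3 \<in> {1..m}" by simp_all
      then show ?thesis by (simp only: sum.delta finite_atLeastAtMost if_True)
    qed
    finally show ?thesis by (simp add: C_def)
  qed
  have Tail: "(\<Sum>k\<in>{m+1..m+n}. s k * a (N - k)) = (\<Sum>i\<in>{1..n}. s (i + m) * a (n - i))"
  proof -
    have "(\<Sum>k\<in>{1+m..n+m}. s k * a (N - k)) = (\<Sum>i\<in>{1..n}. s (i + m) * a (N - (i + m)))"
      by (rule sum.shift_bounds_cl_nat_ivl)
    then show ?thesis by (simp add: N_def add.commute)
  qed
  have TailB: "2 * a m - (3 * M^2 + 7 * M) \<le> a m * (of_nat n * a n) - (\<Sum>i\<in>{1..n}. s (i + m) * a (n - i))"
  proof -
    have eq: "a m * (of_nat n * a n) - (\<Sum>i\<in>{1..n}. s (i + m) * a (n - i))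
        = (\<Sum>i\<in>{1..n}. (a m * s i - s (i + m)) * a (n - i))"
    proof -
      have r: "of_nat n * a n = (\<Sum>i\<in>{1..n}. s i * a (n - i))"
        using A_rec[of n] by (simp add: s_def)
      have "a m * (of_nat n * a n) = (\<Sum>i\<in>{1..n}. a m * (s i * a (n - i)))"
        unfolding r by (simp only: sum_distrib_left)
      then have "a m * (of_nat n * a n) - (\<Sum>i\<in>{1..n}. s (i + m) * a (n - i))
         = (\<Sum>i\<in>{1..n}. a m * (s i * a (n - i)) - s (i + m) * a (n - i))"
        by (simp only: sum_subtractf)
      also have "\<dots> = (\<Sum>i\<in>{1..n}. (a m * s i - s (i + m)) * a (n - i))"
        by (rule sum.cong) (simp_all add: algebra_simps)
      finally show ?thesis .
    qed
    have nn: "0 \<le> (a m * s i - s (i + m)) * a (n - i)" if i: "i \<in> {1..n}" for i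
    proof -
      have "2 * a m \<le> a m * s i" using s_ge[of i] i a_ge[of m] by (simp add: mult.commute mult_left_mono)
      moreover have "s (i + m) \<le> 3 * M^2 + 7 * M" using i nm by (intro s_le2) auto
      ultimately have "0 \<le> a m * s i - s (i + m)" using big M15 zero_le_power2[of M] by linarith
      then show ?thesis using a_ge[of "n - i"] by simp
    qed
    have "(a m * s n - s (n + m)) * a (n - n) \<le> (\<Sum>i\<in>{1..n}. (a m * s i - s (i + m)) * a (n - i))"
      by (rule member_le_sum) (use n1 nn in auto)
    moreover have "2 * a m - (3 * M^2 + 7 * M) \<le> (a m * s n - s (n + m)) * a (n - n)"
    proof -
      have "2 * a m \<le> a m * s n" using s_ge[OF n1] a_ge[of m] by (simp add: mult.commute mult_left_mono)
      moreover have "s (n + m) \<le> 3 * M^2 + 7 * M" using nm by (intro s_le2) auto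
      ultimately show ?thesis by (simp add: A0)
    qed
    ultimately show ?thesis using eq by linarith
  qed
  have "of_nat N * a N \<le> a n * (M * a m) + (3 * M^2 + 14 * M)
       + (a m * (of_nat n * a n) - (2 * a m - (3 * M^2 + 7 * M)))"
    using rec sumsplit P1 P1b Err Tail TailB by linarith
  also have "\<dots> < (of_nat n + M) * (a n * a m)"
    using big by (simp add: algebra_simps)
  also have "of_nat n + M = of_nat N" by (simp add: N_def M_def)
  finally have "of_nat N * a N < of_nat N * (a n * a m)" .
  then show ?thesis by (simp add: N_def mult_less_cancel_left)
qed

lemma main_all:
  "1 \<le> n \<Longrightarrow> 1 \<le> m \<Longrightarrow> a (n + m) \<le> a n * a m + (if exc n m then 2 else 0)
     \<and> (\<not> spec n m \<longrightarrow> a (n + m) < a n * a m)"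
proof (induction "n + m" arbitrary: n m rule: less_induct)
  case less
  have IH: "a (x + y) \<le> a x * a y + (if exc x y then 2 else 0)"
    if "1 \<le> x" "1 \<le> y" "x + y < n + m" for x y
    using less.hyps[OF that(3) that(1) that(2)] by blast
  show ?case
  proof (cases "n < 15 \<and> m < 15")
    case True
    then show ?thesis using tab_pairs less.prems by auto
  next
    case False
    have E: "0 \<le> (if exc n m then 2 else (0::rat))" by simp
    show ?thesis
    proof (cases "n \<le> m")
      case True
      have m15: "15 \<le> m" using False True by auto
      have "a (n + m) < a n * a m"
        by (rule core[OF less.prems(1) True m15 IH])
      then show ?thesis using E by linarith
    next
      case nm: False
      have n15: "15 \<le> n" using False nm by auto
      have mn: "m \<le> n" using nm by simp
      have IH': "a (x + y) \<le> a x * a y + (if exc x y then 2 else 0)"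
        if "1 \<le> x" "1 \<le> y" "x + y < m + n" for x y
        using IH[OF that(1,2)] that(3) by (simp add: add.commute)
      have "a (m + n) < a m * a n"
        by (rule core[OF less.prems(2) mn n15 IH'])
      then have "a (n + m) < a n * a m" by (simp add: add.commute mult.commute)
      then show ?thesis using E by linarith
    qed
  qed
qed

theorem theorem2p6:
  fixes n m :: nat
  assumes "n \<ge> 1" and "m \<ge> 1"
    and "{n, m} \<noteq> {1, 1}" and "{n, m} \<noteq> {1, 3}"
  shows "cubic_overpartition n * cubic_overpartition m \<ge> cubic_overpartition (n + m)
    \<and> (cubic_overpartition n * cubic_overpartition m = cubic_overpartition (n + m)
         \<longrightarrow> {n, m} = {1, 2})"
proof -
  have ne: "\<not> exc n m" using assms(3,4) by (auto simp: exc_def insert_commute)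
  have M: "a (n + m) \<le> a n * a m + (if exc n m then 2 else 0)
     \<and> (\<not> spec n m \<longrightarrow> a (n + m) < a n * a m)" by (rule main_all) (use assms in auto)
  show ?thesis
  proof
    show "a (n + m) \<le> a n * a m" using M ne by simp
    show "a n * a m = a (n + m) \<longrightarrow> {n, m} = {1, 2}"
    proof
      assume "a n * a m = a (n + m)"
      then have "spec n m" using M by auto
      then show "{n, m} = {1, 2}" using ne by (auto simp: spec_def insert_commute)
    qed
  qed
qed

end
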